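(* Let $A$ and $B$ be rings, $f: A\to B$ an injective ring homomorphism and $J$ a proper ideal of $B$. (i) If $f(A)\cap J=\{0\}$, then $A\bowtie^{f}J$ is a weak Armendariz ring if and only if $f(A)+J$ is a weak Armendariz ring. (ii) If $J\subseteq\mathrm{nil}(B)$ and $f(A)+J$ is a weak Armendariz ring, then $A\bowtie^{f}J$ is a weak Armendariz ring.
   Context: All rings are associative with identity (not necessarily commutative), ring homomorphisms are unital, and ideals are two-sided. $\mathrm{nil}(R)$ denotes the set of nilpotent elements of a ring $R$. For a ring homomorphism $f:A\to B$ and an ideal $J$ of $B$, the amalgamation is the subring $A\bowtie^{f}J=\{(a,f(a)+j)\mid a\in A,\ j\in J\}$ of $A\times B$; $f(A)+J=\{f(a)+j: a\in A, j\in J\}$ is a subring of $B$. A ring $R$ is weak Armendariz if whenever $p(x)=\sum_{i=0}^n a_ix^i$ and $q(x)=\sum_{j=0}^m b_jx^j$ in $R[x]$ satisfy $p(x)q(x)=0$, then $a_ib_j\in\mathrm{nil}(R)$ for all $i,j$. *)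

theory Defs
  imports "HOL-Algebra.Polynomials" "HOL-Algebra.Chinese_Remainder"
begin

definition nilset :: "('a, 'b) ring_scheme \<Rightarrow> 'a set" where
  "nilset R = {x \<in> carrier R. \<exists>n::nat. x [^]\<^bsub>R\<^esub> n = \<zero>\<^bsub>R\<^esub>}"

text \<open>Polynomials are coefficient lists (highest degree first),
  multiplied by the library's polynomial multiplication; the product is normalised, so
  it is the zero polynomial iff it is the empty list.\<close>
definition weak_armendariz :: "('a, 'b) ring_scheme \<Rightarrow> bool" where
  "weak_armendariz R \<longleftrightarrow> ring R \<and>
     (\<forall>p q. set p \<subseteq> carrier R \<longrightarrow> set q \<subseteq> carrier R \<longrightarrow>
        ring.poly_mult R p q = [] \<longrightarrow>
        (\<forall>a\<in>set p. \<forall>b\<in>set q. a \<otimes>\<^bsub>R\<^esub> b \<in> nilset R))"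

definition amalgamation ::
  "('a, 'c) ring_scheme \<Rightarrow> ('b, 'd) ring_scheme \<Rightarrow> ('a \<Rightarrow> 'b) \<Rightarrow> 'b set \<Rightarrow> ('a \<times> 'b) ring" where
  "amalgamation A B f J =
     (RDirProd A B)\<lparr>carrier := {(a, f a \<oplus>\<^bsub>B\<^esub> j) | a j. a \<in> carrier A \<and> j \<in> J}\<rparr>"

definition image_plus_ideal ::
  "('a, 'c) ring_scheme \<Rightarrow> ('b, 'd) ring_scheme \<Rightarrow> ('a \<Rightarrow> 'b) \<Rightarrow> 'b set \<Rightarrow> ('b, 'd) ring_scheme" where
  "image_plus_ideal A B f J =
     B\<lparr>carrier := {f a \<oplus>\<^bsub>B\<^esub> j | a j. a \<in> carrier A \<and> j \<in> J}\<rparr>"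

end

theory Submission
  imports Defs
begin

lemma wa_pullback:
  assumes R: "ring R" and S: "ring S" and h: "h \<in> ring_hom R S"
    and WA: "weak_armendariz S"
    and ker: "\<And>x. x \<in> carrier R \<Longrightarrow> h x = \<zero>\<^bsub>S\<^esub> \<Longrightarrow> x \<in> nilset R"
  shows "weak_armendariz R"
proof -
  interpret H: ring_hom_ring R S h using R S h by (simp add: ring_hom_ring.intro ring_hom_ring_axioms.intro)
  show ?thesis unfolding weak_armendariz_def
  proof (intro conjI R allI impI ballI)
    fix p q a b
    assume p: "set p \<subseteq> carrier R" and q: "set q \<subseteq> carrier R"
      and pq: "ring.poly_mult R p q = []" and a: "a \<in> set p" and b: "b \<in> set q"
    have ac: "a \<in> carrier R" and bc: "b \<in> carrier R" using p q a b by auto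
    have m0: "ring.poly_mult S (map h p) (map h q) = []"
      using H.poly_mult_hom'[OF p q] pq by simp
    moreover have m1: "set (map h p) \<subseteq> carrier S" "set (map h q) \<subseteq> carrier S"
      using p q by auto
    ultimately have "h a \<otimes>\<^bsub>S\<^esub> h b \<in> nilset S"
    proof -
      have "\<forall>a\<in>set (map h p). \<forall>b\<in>set (map h q). a \<otimes>\<^bsub>S\<^esub> b \<in> nilset S"
        using WA m0 m1 unfolding weak_armendariz_def by blast
      thus ?thesis using a b by auto
    qed
    then obtain n where "(h a \<otimes>\<^bsub>S\<^esub> h b) [^]\<^bsub>S\<^esub> (n::nat) = \<zero>\<^bsub>S\<^esub>"
      unfolding nilset_def by auto
    hence "h ((a \<otimes>\<^bsub>R\<^esub> b) [^]\<^bsub>R\<^esub> n) = \<zero>\<^bsub>S\<^esub>"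
      using ac bc by (simp add: H.hom_nat_pow)
    hence "(a \<otimes>\<^bsub>R\<^esub> b) [^]\<^bsub>R\<^esub> n \<in> nilset R"
      using ker ac bc by auto
    then obtain m where "((a \<otimes>\<^bsub>R\<^esub> b) [^]\<^bsub>R\<^esub> n) [^]\<^bsub>R\<^esub> (m::nat) = \<zero>\<^bsub>R\<^esub>"
      unfolding nilset_def by auto
    hence "(a \<otimes>\<^bsub>R\<^esub> b) [^]\<^bsub>R\<^esub> (n * m) = \<zero>\<^bsub>R\<^esub>"
      using ac bc by (simp add: H.R.nat_pow_pow)
    thus "a \<otimes>\<^bsub>R\<^esub> b \<in> nilset R" unfolding nilset_def using ac bc by blast
  qed
qed


lemma RDP_ops:
  "\<one>\<^bsub>RDirProd R S\<^esub> = (\<one>\<^bsub>R\<^esub>, \<one>\<^bsub>S\<^esub>)"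
  "\<zero>\<^bsub>RDirProd R S\<^esub> = (\<zero>\<^bsub>R\<^esub>, \<zero>\<^bsub>S\<^esub>)"
  "(a, b) \<otimes>\<^bsub>RDirProd R S\<^esub> (c, d) = (a \<otimes>\<^bsub>R\<^esub> c, b \<otimes>\<^bsub>S\<^esub> d)"
  "(a, b) \<oplus>\<^bsub>RDirProd R S\<^esub> (c, d) = (a \<oplus>\<^bsub>R\<^esub> c, b \<oplus>\<^bsub>S\<^esub> d)"
  by (simp_all add: RDirProd_def DirProd_def monoid.defs)

lemma RDP_neg:
  assumes "ring R" "ring S" "a \<in> carrier R" "b \<in> carrier S"
  shows "\<ominus>\<^bsub>RDirProd R S\<^esub> (a, b) = (\<ominus>\<^bsub>R\<^esub> a, \<ominus>\<^bsub>S\<^esub> b)"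
proof -
  interpret P: ring "RDirProd R S" using RDirProd_ring assms by blast
  interpret R: ring R by fact
  interpret S: ring S by fact
  show ?thesis
    by (rule P.minus_equality) (auto simp: RDP_ops RDirProd_carrier assms R.l_neg S.l_neg)
qed

lemma RDP_pow: "(a, b) [^]\<^bsub>RDirProd R S\<^esub> (n::nat) = (a [^]\<^bsub>R\<^esub> n, b [^]\<^bsub>S\<^esub> n)"
  by (induct n) (simp_all add: RDP_ops)


lemma amal_subring:
  assumes A: "ring A" and B: "ring B" and f: "f \<in> ring_hom A B" and J: "ideal J B"
  shows "subring {(a, f a \<oplus>\<^bsub>B\<^esub> j) | a j. a \<in> carrier A \<and> j \<in> J} (RDirProd A B)"
proof -
  interpret H: ring_hom_ring A B f using A B f by (simp add: ring_hom_ring.intro ring_hom_ring_axioms.intro)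
  interpret J: ideal J B by fact
  interpret P: ring "RDirProd A B" using RDirProd_ring A B by blast
  have Jc: "\<And>j. j \<in> J \<Longrightarrow> j \<in> carrier B" using J.a_subset by blast
  show ?thesis
  proof (rule P.subringI)
    show "{(a, f a \<oplus>\<^bsub>B\<^esub> j) | a j. a \<in> carrier A \<and> j \<in> J} \<subseteq> carrier (RDirProd A B)"
      by (auto simp: RDirProd_carrier Jc)
    show "\<one>\<^bsub>RDirProd A B\<^esub> \<in> {(a, f a \<oplus>\<^bsub>B\<^esub> j) | a j. a \<in> carrier A \<and> j \<in> J}"
      by (auto simp: RDP_ops intro!: exI[of _ "\<one>\<^bsub>A\<^esub>"] exI[of _ "\<zero>\<^bsub>B\<^esub>"])
  next
    fix h assume "h \<in> {(a, f a \<oplus>\<^bsub>B\<^esub> j) | a j. a \<in> carrier A \<and> j \<in> J}"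
    then obtain a j where h: "h = (a, f a \<oplus>\<^bsub>B\<^esub> j)" and a: "a \<in> carrier A" and j: "j \<in> J" by blast
    have "\<ominus>\<^bsub>RDirProd A B\<^esub> h = (\<ominus>\<^bsub>A\<^esub> a, f (\<ominus>\<^bsub>A\<^esub> a) \<oplus>\<^bsub>B\<^esub> \<ominus>\<^bsub>B\<^esub> j)"
      using a j Jc by (simp add: h RDP_neg A B H.S.minus_add)
    thus "\<ominus>\<^bsub>RDirProd A B\<^esub> h \<in> {(a, f a \<oplus>\<^bsub>B\<^esub> j) | a j. a \<in> carrier A \<and> j \<in> J}"
      using a j by blast
  next
    fix h1 h2 assume "h1 \<in> {(a, f a \<oplus>\<^bsub>B\<^esub> j) | a j. a \<in> carrier A \<and> j \<in> J}"
      "h2 \<in> {(a, f a \<oplus>\<^bsub>B\<^esub> j) | a j. a \<in> carrier A \<and> j \<in> J}"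
    then obtain a j a' j' where h: "h1 = (a, f a \<oplus>\<^bsub>B\<^esub> j)" "h2 = (a', f a' \<oplus>\<^bsub>B\<^esub> j')"
      and a: "a \<in> carrier A" "a' \<in> carrier A" and j: "j \<in> J" "j' \<in> J" by blast
    have jc: "j \<in> carrier B" "j' \<in> carrier B" using j Jc by auto
    have fa: "f a \<in> carrier B" "f a' \<in> carrier B" using a by auto
    have "h1 \<otimes>\<^bsub>RDirProd A B\<^esub> h2 = (a \<otimes>\<^bsub>A\<^esub> a', f (a \<otimes>\<^bsub>A\<^esub> a') \<oplus>\<^bsub>B\<^esub>
        (f a \<otimes>\<^bsub>B\<^esub> j' \<oplus>\<^bsub>B\<^esub> j \<otimes>\<^bsub>B\<^esub> f a' \<oplus>\<^bsub>B\<^esub> j \<otimes>\<^bsub>B\<^esub> j'))"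
      using a jc fa by (simp add: h RDP_ops H.S.l_distr H.S.r_distr H.S.a_ac)
    moreover have "f a \<otimes>\<^bsub>B\<^esub> j' \<oplus>\<^bsub>B\<^esub> j \<otimes>\<^bsub>B\<^esub> f a' \<oplus>\<^bsub>B\<^esub> j \<otimes>\<^bsub>B\<^esub> j' \<in> J"
      using j fa jc by (simp add: J.I_l_closed J.I_r_closed)
    moreover have "a \<otimes>\<^bsub>A\<^esub> a' \<in> carrier A" using a by simp
    ultimately show "h1 \<otimes>\<^bsub>RDirProd A B\<^esub> h2 \<in> {(a, f a \<oplus>\<^bsub>B\<^esub> j) | a j. a \<in> carrier A \<and> j \<in> J}"
      by blast
    have "h1 \<oplus>\<^bsub>RDirProd A B\<^esub> h2 = (a \<oplus>\<^bsub>A\<^esub> a', f (a \<oplus>\<^bsub>A\<^esub> a') \<oplus>\<^bsub>B\<^esub> (j \<oplus>\<^bsub>B\<^esub> j'))"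
      using a jc fa by (simp add: h RDP_ops H.S.a_ac)
    moreover have "j \<oplus>\<^bsub>B\<^esub> j' \<in> J" using j by simp
    moreover have "a \<oplus>\<^bsub>A\<^esub> a' \<in> carrier A" using a by simp
    ultimately show "h1 \<oplus>\<^bsub>RDirProd A B\<^esub> h2 \<in> {(a, f a \<oplus>\<^bsub>B\<^esub> j) | a j. a \<in> carrier A \<and> j \<in> J}"
      by blast
  qed
qed

lemma amal_ring:
  assumes A: "ring A" and B: "ring B" and f: "f \<in> ring_hom A B" and J: "ideal J B"
  shows "ring (amalgamation A B f J)"
  unfolding amalgamation_def
  using ring.subring_is_ring[OF RDirProd_ring[OF A B] amal_subring[OF assms]] .

lemma ipi_subring:
  assumes A: "ring A" and B: "ring B" and f: "f \<in> ring_hom A B" and J: "ideal J B"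
  shows "subring {f a \<oplus>\<^bsub>B\<^esub> j | a j. a \<in> carrier A \<and> j \<in> J} B"
proof -
  have "subring (snd ` {(a, f a \<oplus>\<^bsub>B\<^esub> j) | a j. a \<in> carrier A \<and> j \<in> J}) B"
  proof (rule ring_hom_ring.img_is_subring[OF _ amal_subring[OF assms]])
    have "snd \<in> ring_hom (RDirProd A B) B"
      by (rule ring_hom_memI) (auto simp: RDirProd_carrier RDP_ops)
    thus "ring_hom_ring (RDirProd A B) B snd"
      using RDirProd_ring[OF A B] B by (simp add: ring_hom_ring.intro ring_hom_ring_axioms.intro)
  qed
  moreover have "snd ` {(a, f a \<oplus>\<^bsub>B\<^esub> j) | a j. a \<in> carrier A \<and> j \<in> J} =
     {f a \<oplus>\<^bsub>B\<^esub> j | a j. a \<in> carrier A \<and> j \<in> J}" by force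
  ultimately show ?thesis by simp
qed

lemma ipi_ring:
  assumes A: "ring A" and B: "ring B" and f: "f \<in> ring_hom A B" and J: "ideal J B"
  shows "ring (image_plus_ideal A B f J)"
  unfolding image_plus_ideal_def
  using ring.subring_is_ring[OF B ipi_subring[OF assms]] .


lemma pow_carrier_upd: "x [^]\<^bsub>R\<lparr>carrier := H\<rparr>\<^esub> (n::nat) = x [^]\<^bsub>R\<^esub> n"
  by (induct n) simp_all

theorem theorem4p1:
  fixes A :: "('a, 'c) ring_scheme" and B :: "('b, 'd) ring_scheme"
    and f :: "'a \<Rightarrow> 'b" and J :: "'b set"
  assumes "ring A" and "ring B"
    and "f \<in> ring_hom A B" and "inj_on f (carrier A)"
    and "ideal J B" and "J \<noteq> carrier B"
  shows "(f ` carrier A \<inter> J = {\<zero>\<^bsub>B\<^esub>} \<longrightarrow>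
           (weak_armendariz (amalgamation A B f J) \<longleftrightarrow>
            weak_armendariz (image_plus_ideal A B f J)))
       \<and> (J \<subseteq> nilset B \<and> weak_armendariz (image_plus_ideal A B f J) \<longrightarrow>
           weak_armendariz (amalgamation A B f J))"
proof -
  note A = assms(1) and B = assms(2) and fh = assms(3) and inj = assms(4) and Jid = assms(5)
  interpret H: ring_hom_ring A B f using A B fh by (simp add: ring_hom_ring.intro ring_hom_ring_axioms.intro)
  interpret J: ideal J B by fact
  have Jc: "\<And>j. j \<in> J \<Longrightarrow> j \<in> carrier B" using J.a_subset by blast
  define M where "M = amalgamation A B f J"
  define P where "P = image_plus_ideal A B f J"
  have Mr: "ring M" unfolding M_def using amal_ring[OF A B fh Jid] .
  have Pr: "ring P" unfolding P_def using ipi_ring[OF A B fh Jid] .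
  have cM: "carrier M = {(a, f a \<oplus>\<^bsub>B\<^esub> j) | a j. a \<in> carrier A \<and> j \<in> J}"
    by (simp add: M_def amalgamation_def)
  have cP: "carrier P = {f a \<oplus>\<^bsub>B\<^esub> j | a j. a \<in> carrier A \<and> j \<in> J}"
    by (simp add: P_def image_plus_ideal_def)
  have zM: "\<zero>\<^bsub>M\<^esub> = (\<zero>\<^bsub>A\<^esub>, \<zero>\<^bsub>B\<^esub>)" by (simp add: M_def amalgamation_def RDP_ops)
  have zP: "\<zero>\<^bsub>P\<^esub> = \<zero>\<^bsub>B\<^esub>" by (simp add: P_def image_plus_ideal_def)
  have snd_hom: "snd \<in> ring_hom M P"
  proof (rule ring_hom_memI)
    fix x assume "x \<in> carrier M" thus "snd x \<in> carrier P" unfolding cM cP by fastforce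
  next
    fix x y assume "x \<in> carrier M" "y \<in> carrier M"
    thus "snd (x \<otimes>\<^bsub>M\<^esub> y) = snd x \<otimes>\<^bsub>P\<^esub> snd y"
      unfolding cM by (auto simp: M_def P_def amalgamation_def image_plus_ideal_def RDP_ops)
  next
    fix x y assume "x \<in> carrier M" "y \<in> carrier M"
    thus "snd (x \<oplus>\<^bsub>M\<^esub> y) = snd x \<oplus>\<^bsub>P\<^esub> snd y"
      unfolding cM by (auto simp: M_def P_def amalgamation_def image_plus_ideal_def RDP_ops)
  next
    show "snd \<one>\<^bsub>M\<^esub> = \<one>\<^bsub>P\<^esub>"
      by (simp add: M_def P_def amalgamation_def image_plus_ideal_def RDP_ops)
  qed
  have zero_nil: "\<zero>\<^bsub>R\<^esub> \<in> nilset R" if "ring R" for R :: "('x, 'y) ring_scheme"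
  proof -
    interpret R: ring R by fact
    show ?thesis unfolding nilset_def by (auto intro!: exI[of _ "1::nat"])
  qed
  have kerJ: "f a \<in> J" if "a \<in> carrier A" "j \<in> J" "f a \<oplus>\<^bsub>B\<^esub> j = \<zero>\<^bsub>B\<^esub>" for a j
  proof -
    have "f a = \<ominus>\<^bsub>B\<^esub> j" using that Jc by (simp add: H.S.minus_equality)
    thus ?thesis using that by simp
  qed
  have part1: "weak_armendariz M \<longleftrightarrow> weak_armendariz P" if triv: "f ` carrier A \<inter> J = {\<zero>\<^bsub>B\<^esub>}"
  proof
    assume "weak_armendariz P"
    show "weak_armendariz M"
    proof (rule wa_pullback[OF Mr Pr snd_hom \<open>weak_armendariz P\<close>])
      fix x assume x: "x \<in> carrier M" "snd x = \<zero>\<^bsub>P\<^esub>"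
      then obtain a j where xe: "x = (a, f a \<oplus>\<^bsub>B\<^esub> j)" and a: "a \<in> carrier A" and j: "j \<in> J"
        unfolding cM by blast
      have s0: "f a \<oplus>\<^bsub>B\<^esub> j = \<zero>\<^bsub>B\<^esub>" using x xe zP by simp
      have "f a \<in> f ` carrier A \<inter> J" using kerJ[OF a j s0] a by blast
      hence fa0: "f a = \<zero>\<^bsub>B\<^esub>" unfolding triv by simp
      hence "a = \<zero>\<^bsub>A\<^esub>" using inj a by (metis H.hom_zero H.R.zero_closed inj_on_def)
      moreover have "j = \<zero>\<^bsub>B\<^esub>" using s0 fa0 j Jc by simp
      ultimately have "x = \<zero>\<^bsub>M\<^esub>" using xe zM fa0 by simp
      thus "x \<in> nilset M" using zero_nil[OF Mr] by simp
    qed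
  next
    assume WM: "weak_armendariz M"
    have bij: "bij_betw snd (carrier M) (carrier P)"
    proof (rule bij_betw_imageI)
      show "snd ` carrier M = carrier P" unfolding cM cP by force
      show "inj_on snd (carrier M)"
      proof (rule inj_onI)
        fix x y assume "x \<in> carrier M" "y \<in> carrier M" and e: "snd x = snd y"
        then obtain a j a' j' where xe: "x = (a, f a \<oplus>\<^bsub>B\<^esub> j)" "y = (a', f a' \<oplus>\<^bsub>B\<^esub> j')"
          and a: "a \<in> carrier A" "a' \<in> carrier A" and j: "j \<in> J" "j' \<in> J" unfolding cM by blast
        have jc: "j \<in> carrier B" "j' \<in> carrier B" using j Jc by auto
        have e2: "f a \<oplus>\<^bsub>B\<^esub> j = f a' \<oplus>\<^bsub>B\<^esub> j'" using e xe by simp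
        have fj: "f (a \<ominus>\<^bsub>A\<^esub> a') = j' \<ominus>\<^bsub>B\<^esub> j"
        proof -
          have "f (a \<ominus>\<^bsub>A\<^esub> a') = f a \<ominus>\<^bsub>B\<^esub> f a'" using a by (simp add: a_minus_def)
          also have "\<dots> = j' \<ominus>\<^bsub>B\<^esub> j"
          proof -
            have fc: "f a \<in> carrier B" "f a' \<in> carrier B" using a by auto
            have "f a = f a' \<oplus>\<^bsub>B\<^esub> j' \<ominus>\<^bsub>B\<^esub> j"
              using e2 fc jc by (metis H.S.add.inv_solve_right H.S.add.m_closed a_minus_def)
            hence "f a \<ominus>\<^bsub>B\<^esub> f a' = (f a' \<oplus>\<^bsub>B\<^esub> j' \<ominus>\<^bsub>B\<^esub> j) \<ominus>\<^bsub>B\<^esub> f a'" by simp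
            also have "\<dots> = \<ominus>\<^bsub>B\<^esub> f a' \<oplus>\<^bsub>B\<^esub> (f a' \<oplus>\<^bsub>B\<^esub> (j' \<ominus>\<^bsub>B\<^esub> j))"
              using fc jc unfolding a_minus_def
              by (simp only: H.S.a_comm[of _ "\<ominus>\<^bsub>B\<^esub> f a'"] H.S.a_assoc H.S.a_inv_closed H.S.add.m_closed)
            also have "\<dots> = j' \<ominus>\<^bsub>B\<^esub> j" using fc jc by (simp add: H.S.r_neg1)
            finally show ?thesis .
          qed
          finally show ?thesis .
        qed
        moreover have "j' \<ominus>\<^bsub>B\<^esub> j \<in> J" using j by (simp add: a_minus_def)
        moreover have "a \<ominus>\<^bsub>A\<^esub> a' \<in> carrier A" using a by simp
        ultimately have mem: "f (a \<ominus>\<^bsub>A\<^esub> a') \<in> f ` carrier A \<inter> J"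
          by (simp only: fj[symmetric] IntI imageI)
        hence "f (a \<ominus>\<^bsub>A\<^esub> a') = \<zero>\<^bsub>B\<^esub>" unfolding triv by simp
        hence "a \<ominus>\<^bsub>A\<^esub> a' = \<zero>\<^bsub>A\<^esub>" using inj a
          by (metis H.hom_zero H.R.zero_closed H.R.minus_closed inj_on_def)
        hence "a = a'" using a by (simp add: H.R.r_right_minus_eq)
        thus "x = y" using xe e by simp
      qed
    qed
    have iso: "snd \<in> ring_iso M P" using bij snd_hom by (simp add: ring_iso_def)
    have giso: "inv_into (carrier M) snd \<in> ring_iso P M" using ring_iso_set_sym[OF Mr iso] .
    show "weak_armendariz P"
    proof (rule wa_pullback[OF Pr Mr _ WM])
      show "inv_into (carrier M) snd \<in> ring_hom P M" using giso by (simp add: ring_iso_def)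
      fix y assume y: "y \<in> carrier P" "inv_into (carrier M) snd y = \<zero>\<^bsub>M\<^esub>"
      have "y \<in> snd ` carrier M" using y bij by (simp add: bij_betw_def)
      hence "y = snd (inv_into (carrier M) snd y)" by (simp add: f_inv_into_f)
      hence "y = \<zero>\<^bsub>P\<^esub>" using y zM zP by simp
      thus "y \<in> nilset P" using zero_nil[OF Pr] by simp
    qed
  qed
  have part2: "weak_armendariz M" if nil: "J \<subseteq> nilset B" and WP: "weak_armendariz P"
  proof (rule wa_pullback[OF Mr Pr snd_hom WP])
    fix x assume x: "x \<in> carrier M" "snd x = \<zero>\<^bsub>P\<^esub>"
    then obtain a j where xe: "x = (a, f a \<oplus>\<^bsub>B\<^esub> j)" and a: "a \<in> carrier A" and j: "j \<in> J"
      unfolding cM by blast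
    have s0: "f a \<oplus>\<^bsub>B\<^esub> j = \<zero>\<^bsub>B\<^esub>" using x xe zP by simp
    have "f a \<in> nilset B" using kerJ[OF a j s0] nil by blast
    then obtain n where "f a [^]\<^bsub>B\<^esub> (n::nat) = \<zero>\<^bsub>B\<^esub>" unfolding nilset_def by blast
    hence "f (a [^]\<^bsub>A\<^esub> n) = f \<zero>\<^bsub>A\<^esub>" using a by (simp add: H.hom_nat_pow)
    hence an: "a [^]\<^bsub>A\<^esub> n = \<zero>\<^bsub>A\<^esub>" using inj a by (simp add: inj_on_def)
    have xe0: "x = (a, \<zero>\<^bsub>B\<^esub>)" using xe s0 by simp
    have "x [^]\<^bsub>M\<^esub> (Suc n) = x [^]\<^bsub>RDirProd A B\<^esub> (Suc n)"
      unfolding M_def amalgamation_def by (rule pow_carrier_upd)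
    also have "\<dots> = (a [^]\<^bsub>A\<^esub> Suc n, \<zero>\<^bsub>B\<^esub> [^]\<^bsub>B\<^esub> Suc n)"
      unfolding xe0 by (rule RDP_pow)
    also have "\<dots> = \<zero>\<^bsub>M\<^esub>" using an a zM by simp
    finally show "x \<in> nilset M" using x unfolding nilset_def by blast
  qed
  show ?thesis using part1 part2 unfolding M_def P_def by blast
qed

end
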